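(* Assume $P$ is symmetric and transitive, and let $X_t=(\Phi^* )^t(I-J)$ for $t\ge0$. Then for every $t\ge0$: (1) $X_t\in\mathrm{Span}\{P^k,J:0\le k\le 2t\}$; in particular all diagonal entries of $X_t$ are equal, to a common value denoted $r_t$; (2) $X_{t+1}=P_qX_tP_q+q^2r_t\,(I-P^2)$.
   Context: $P$ is a row-stochastic $N\times N$ matrix, $q\in[0,1]$, $P_q=(1-q)I+qP$, $J=\mathbf 1\mathbf 1^\top/N$. $P$ is transitive if for every pair $(i,j)$ there is a permutation matrix $\Pi$ with $\Pi_{ij}=1$ and $\Pi P\Pi^{-1}=P$. $\beta_1,\dots,\beta_N$ are independent random variables in $\{1,\dots,N\}$ with $\mathbb P(\beta_i=j)=p_{ij}$, $e_i$ the standard basis vectors, $K=(1-q)I+q\sum_ie_ie_{\beta_i}^\top$, $\Phi(X)=\mathbb E[KXK^\top]$, and $\Phi^*$ is its adjoint with respect to $\langle A,B\rangle=\mathrm{Tr}(AB^\top)$; $(\Phi^* )^t$ is the $t$-fold composition. *)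

theory Defs
  imports "HOL-Analysis.Analysis"
begin

text \<open>N x N real matrices are represented as real^'n^'n with N = CARD('n).
  The HOL-Analysis inner product on real^'n^'n is sum_{i,j} A_ij B_ij = Tr(A B^T).\<close>

definition row_stochastic :: "real^'n^'n \<Rightarrow> bool" where
  "row_stochastic P \<longleftrightarrow> (\<forall>i j. P$i$j \<ge> 0) \<and> (\<forall>i. (\<Sum>j\<in>UNIV. P$i$j) = 1)"

definition perm_matrix :: "real^'n^'n \<Rightarrow> bool" where
  "perm_matrix M \<longleftrightarrow> (\<exists>\<sigma>. bij \<sigma> \<and> M = (\<chi> i j. if j = \<sigma> i then 1 else 0))"

definition transitive_mat :: "real^'n^'n \<Rightarrow> bool" where
  "transitive_mat P \<longleftrightarrow> (\<forall>i j. \<exists>Pm. perm_matrix Pm \<and> Pm$i$j = 1 \<and> Pm ** P ** matrix_inv Pm = P)"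

definition Jmat :: "real^'n^'n" where
  "Jmat = (\<chi> i j. 1 / real CARD('n))"

definition mpow :: "real^'n^'n \<Rightarrow> nat \<Rightarrow> real^'n^'n" where
  "mpow A k = ((\<lambda>X. A ** X) ^^ k) (mat 1)"

definition Pq :: "real \<Rightarrow> real^'n^'n \<Rightarrow> real^'n^'n" where
  "Pq q P = (1 - q) *\<^sub>R mat 1 + q *\<^sub>R P"

text \<open>The random matrix K for a realisation b of (beta_1,...,beta_N):
  K = (1-q) I + q sum_i e_i e_{b i}^T.\<close>
definition Kmat :: "real \<Rightarrow> ('n \<Rightarrow> 'n) \<Rightarrow> real^'n^'n" where
  "Kmat q b = (1 - q) *\<^sub>R mat 1 + q *\<^sub>R (\<chi> i j. if j = b i then 1 else 0)"

text \<open>Phi(X) = E[K X K^T], the beta_i independent with P(beta_i = j) = P_ij.\<close>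
definition Phi :: "real^'n^'n \<Rightarrow> real \<Rightarrow> real^'n^'n \<Rightarrow> real^'n^'n" where
  "Phi P q X = (\<Sum>b\<in>(UNIV :: ('n \<Rightarrow> 'n) set). (\<Prod>i\<in>UNIV. P$i$(b i)) *\<^sub>R
                   (Kmat q b ** X ** transpose (Kmat q b)))"

end

theory Submission
  imports Defs "HOL-Library.FuncSet"
begin


lemma expect2:
  fixes P :: "real^'n^'n" and g h :: "'n \<Rightarrow> real"
  assumes rs: "row_stochastic P"
  shows "(\<Sum>b\<in>(UNIV::('n\<Rightarrow>'n) set). (\<Prod>m\<in>UNIV. P$m$(b m)) * (g (b i) * h (b k)))
       = (if i = k then (\<Sum>x\<in>UNIV. P$i$x * g x * h x)
          else (\<Sum>x\<in>UNIV. P$i$x * g x) * (\<Sum>x\<in>UNIV. P$k$x * h x))"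
proof -
  define F where "F m x = P$m$x * (if m = i then g x else 1) * (if m = k then h x else 1)" for m x
  have eq: "(\<Prod>m\<in>UNIV. P$m$(b m)) * (g (b i) * h (b k)) = (\<Prod>m\<in>UNIV. F m (b m))" for b :: "'n \<Rightarrow> 'n"
    by (simp add: F_def prod.distrib prod.delta)
  have "(\<Sum>b\<in>(UNIV::('n\<Rightarrow>'n) set). (\<Prod>m\<in>UNIV. F m (b m))) = (\<Prod>m\<in>UNIV. \<Sum>x\<in>UNIV. F m x)"
    using prod_sum_PiE[of "UNIV::'n set" "\<lambda>_. UNIV" F] by simp
  also have "\<dots> = (\<Prod>m\<in>{i,k}. \<Sum>x\<in>UNIV. F m x) * (\<Prod>m\<in>UNIV-{i,k}. \<Sum>x\<in>UNIV. F m x)"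
    using prod.subset_diff[of "{i,k}" UNIV] by (simp add: mult.commute)
  also have "(\<Prod>m\<in>UNIV-{i,k}. \<Sum>x\<in>UNIV. F m x) = 1"
    by (rule prod.neutral) (use rs in \<open>simp add: F_def row_stochastic_def\<close>)
  finally show ?thesis using eq
    by (cases "i = k") (auto simp: F_def mult.assoc)
qed



lemma inner_mat: "inner (A::real^'n^'m) B = (\<Sum>i\<in>UNIV. \<Sum>j\<in>UNIV. A$i$j * B$i$j)"
  by (simp add: inner_vec_def)

lemma inner_mm: "inner ((A::real^'n^'n) ** B) C = inner B (transpose A ** C)"
proof -
  have "inner (A ** B) C = (\<Sum>i\<in>UNIV. \<Sum>j\<in>UNIV. \<Sum>k\<in>UNIV. A$i$k * B$k$j * C$i$j)"
    by (simp add: inner_mat matrix_matrix_mult_def sum_distrib_right)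
  also have "\<dots> = (\<Sum>i\<in>UNIV. \<Sum>k\<in>UNIV. \<Sum>j\<in>UNIV. A$i$k * B$k$j * C$i$j)"
    by (rule sum.cong[OF refl], rule sum.swap)
  also have "\<dots> = (\<Sum>k\<in>UNIV. \<Sum>i\<in>UNIV. \<Sum>j\<in>UNIV. A$i$k * B$k$j * C$i$j)"
    by (rule sum.swap)
  also have "\<dots> = (\<Sum>k\<in>UNIV. \<Sum>j\<in>UNIV. \<Sum>i\<in>UNIV. A$i$k * B$k$j * C$i$j)"
    by (rule sum.cong[OF refl], rule sum.swap)
  also have "\<dots> = inner B (transpose A ** C)"
    by (simp add: inner_mat matrix_matrix_mult_def transpose_def sum_distrib_left mult_ac)
  finally show ?thesis .
qed

lemma inner_mt: "inner ((B::real^'n^'n) ** transpose K) Y = inner B (Y ** K)"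
proof -
  have "inner (B ** transpose K) Y = (\<Sum>i\<in>UNIV. \<Sum>j\<in>UNIV. \<Sum>k\<in>UNIV. B$i$k * K$j$k * Y$i$j)"
    by (simp add: inner_mat matrix_matrix_mult_def transpose_def sum_distrib_right)
  also have "\<dots> = (\<Sum>i\<in>UNIV. \<Sum>k\<in>UNIV. \<Sum>j\<in>UNIV. B$i$k * K$j$k * Y$i$j)"
    by (rule sum.cong[OF refl], rule sum.swap)
  also have "\<dots> = inner B (Y ** K)"
    by (simp add: inner_mat matrix_matrix_mult_def sum_distrib_left mult_ac)
  finally show ?thesis .
qed



definition psi :: "real^'n^'n \<Rightarrow> real \<Rightarrow> real^'n^'n \<Rightarrow> real^'n^'n" where
  "psi P q Y = (\<Sum>b\<in>(UNIV :: ('n \<Rightarrow> 'n) set). (\<Prod>i\<in>UNIV. P$i$(b i)) *\<^sub>R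
                   (transpose (Kmat q b) ** Y ** Kmat q b))"

lemma adjoint_Phi: fixes P :: "real^'n^'n" shows "adjoint (Phi P q) = psi P q"
proof (rule adjoint_unique, intro allI)
  fix X Y :: "real^'n^'n"
  have k: "inner (K ** X ** transpose K) Y = inner X (transpose K ** Y ** K)" for K :: "real^'n^'n"
    by (metis inner_mm inner_mt matrix_mul_assoc)
  show "inner (Phi P q X) Y = inner X (psi P q Y)"
    unfolding Phi_def psi_def by (simp add: inner_sum_left inner_sum_right k)
qed

lemma sum_ind: "(\<Sum>x\<in>UNIV. (f (x::'n::finite)::real) * (if j = x then 1 else 0)) = f j"
proof -
  have "(\<Sum>x\<in>UNIV. (f x::real) * (if j = x then 1 else 0)) = (\<Sum>x\<in>UNIV. if x = j then f x else 0)"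
    by (rule sum.cong) auto
  then show ?thesis by simp
qed

definition kf :: "real \<Rightarrow> 'n \<Rightarrow> 'n \<Rightarrow> 'n \<Rightarrow> real" where
  "kf q i j x = (1-q) * (if i = j then 1 else 0) + q * (if j = x then 1 else 0)"

lemma Kmat_kf: "Kmat q b $ i $ j = kf q i j (b i)"
  by (simp add: Kmat_def kf_def mat_def)

lemma Pq_entry: "Pq q P $ i $ j = (1-q) * (if i = j then 1 else 0) + q * P$i$j"
  by (simp add: Pq_def mat_def)

lemma sum1: assumes rs: "row_stochastic P"
  shows "(\<Sum>x\<in>UNIV. (P::real^'n^'n)$i$x * kf q i j x) = Pq q P $ i $ j"
proof -
  have "(\<Sum>x\<in>UNIV. P$i$x * kf q i j x) = (\<Sum>x\<in>UNIV. (1-q) * (if i = j then 1 else 0) * P$i$x + q * (P$i$x * (if j = x then 1 else 0)))"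
    by (rule sum.cong) (auto simp: kf_def algebra_simps)
  also have "\<dots> = (1-q) * (if i = j then 1 else 0) * (\<Sum>x\<in>UNIV. P$i$x) + q * P$i$j"
    by (simp add: sum.distrib sum_distrib_left[symmetric] sum_ind)
  finally have "(\<Sum>x\<in>UNIV. P$i$x * kf q i j x) = (1-q) * (if i = j then 1 else 0) * (\<Sum>x\<in>UNIV. P$i$x) + q * P$i$j" .
  then show ?thesis using rs by (simp add: row_stochastic_def Pq_entry)
qed



lemma sum2: assumes rs: "row_stochastic P"
  shows "(\<Sum>x\<in>UNIV. (P::real^'n^'n)$i$x * kf q i j x * kf q i l x)
     = Pq q P $ i $ j * Pq q P $ i $ l + q^2 * ((if j = l then 1 else 0) * P$i$j - P$i$j * P$i$l)"
proof -
  define a where "a = (1-q)^2 * (if i = j then 1 else 0) * (if i = l then (1::real) else 0)"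
  define b where "b = q*(1-q) * (if i = l then (1::real) else 0)"
  define c where "c = q*(1-q) * (if i = j then (1::real) else 0)"
  define d where "d = q^2 * (if j = l then (1::real) else 0)"
  have "(\<Sum>x\<in>UNIV. P$i$x * kf q i j x * kf q i l x) = (\<Sum>x\<in>UNIV. a * P$i$x + b * (P$i$x * (if j = x then 1 else 0))
      + c * (P$i$x * (if l = x then 1 else 0)) + d * (P$i$x * (if j = x then 1 else 0)))"
    by (rule sum.cong) (auto simp: kf_def a_def b_def c_def d_def algebra_simps power2_eq_square)
  also have "\<dots> = a * (\<Sum>x\<in>UNIV. P$i$x) + b * P$i$j + c * P$i$l + d * P$i$j"
    by (simp add: sum.distrib sum_distrib_left[symmetric] sum_ind)
  finally show ?thesis using rs
    by (auto simp: row_stochastic_def Pq_entry a_def b_def c_def d_def algebra_simps power2_eq_square)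
qed



lemma EKK: assumes rs: "row_stochastic P"
  shows "(\<Sum>b\<in>(UNIV::('n\<Rightarrow>'n) set). (\<Prod>m\<in>UNIV. (P::real^'n^'n)$m$(b m)) * (kf q i j (b i) * kf q k l (b k)))
     = Pq q P $ i $ j * Pq q P $ k $ l + (if i = k then q^2 * ((if j = l then 1 else 0) * P$i$j - P$i$j * P$i$l) else 0)"
  using expect2[OF rs, of "kf q i j" i "kf q k l" k] sum1[OF rs] sum2[OF rs]
  by (simp add: mult.assoc)

lemma psi_entry:
  fixes P :: "real^'n^'n"
  shows "psi P q Y $ j $ l = (\<Sum>i\<in>UNIV. \<Sum>k\<in>UNIV. Y$i$k *
     (\<Sum>b\<in>(UNIV::('n\<Rightarrow>'n) set). (\<Prod>m\<in>UNIV. P$m$(b m)) * (kf q i j (b i) * kf q k l (b k))))"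
proof -
  have "psi P q Y $ j $ l = (\<Sum>b\<in>(UNIV::('n\<Rightarrow>'n) set). (\<Prod>m\<in>UNIV. P$m$(b m)) *
       (\<Sum>k\<in>UNIV. (\<Sum>i\<in>UNIV. kf q i j (b i) * Y$i$k) * kf q k l (b k)))"
    by (simp add: psi_def matrix_matrix_mult_def transpose_def Kmat_kf)
  also have "\<dots> = (\<Sum>b\<in>(UNIV::('n\<Rightarrow>'n) set). \<Sum>i\<in>UNIV. \<Sum>k\<in>UNIV. Y$i$k *
       ((\<Prod>m\<in>UNIV. P$m$(b m)) * (kf q i j (b i) * kf q k l (b k))))"
    apply (rule sum.cong[OF refl])
    apply (simp add: sum_distrib_left sum_distrib_right)
    apply (subst sum.swap) apply (rule sum.cong[OF refl])+ by (simp add: mult_ac)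
  also have "\<dots> = (\<Sum>i\<in>UNIV. \<Sum>b\<in>(UNIV::('n\<Rightarrow>'n) set). \<Sum>k\<in>UNIV. Y$i$k *
       ((\<Prod>m\<in>UNIV. P$m$(b m)) * (kf q i j (b i) * kf q k l (b k))))"
    by (rule sum.swap)
  also have "\<dots> = (\<Sum>i\<in>UNIV. \<Sum>k\<in>UNIV. \<Sum>b\<in>(UNIV::('n\<Rightarrow>'n) set). Y$i$k *
       ((\<Prod>m\<in>UNIV. P$m$(b m)) * (kf q i j (b i) * kf q k l (b k))))"
    by (rule sum.cong[OF refl], rule sum.swap)
  finally show ?thesis by (simp add: sum_distrib_left)
qed



lemma psi_const:
  fixes P :: "real^'n^'n"
  assumes rs: "row_stochastic P" and sym: "transpose P = P" and diag: "\<And>i. Y$i$i = r"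
  shows "psi P q Y = Pq q P ** Y ** Pq q P + (q^2 * r) *\<^sub>R (mat 1 - P ** P)"
proof -
  have Ps: "P$i$j = P$j$i" for i j using arg_cong[OF sym, of "\<lambda>M. M$j$i"] by (simp add: transpose_def)
  have Pqs: "Pq q P $ i $ j = Pq q P $ j $ i" for i j by (simp add: Pq_entry Ps eq_commute)
  have cs: "(\<Sum>i\<in>UNIV. P$i$j) = 1" for j
  proof -
    have "(\<Sum>i\<in>UNIV. P$i$j) = (\<Sum>i\<in>UNIV. P$j$i)" by (rule sum.cong[OF refl]) (rule Ps)
    then show ?thesis using rs by (simp add: row_stochastic_def)
  qed
  show ?thesis
  proof (rule vec_eq_iff[THEN iffD2, rule_format], rule vec_eq_iff[THEN iffD2, rule_format])
    fix j l
    let ?Q = "Pq q P"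
    have "psi P q Y $ j $ l = (\<Sum>i\<in>UNIV. \<Sum>k\<in>UNIV. Y$i$k * ?Q$i$j * ?Q$k$l)
        + (\<Sum>i\<in>UNIV. \<Sum>k\<in>UNIV. if i = k then Y$i$k * q^2 * ((if j = l then 1 else 0) * P$i$j - P$i$j * P$i$l) else 0)"
      unfolding psi_entry EKK[OF rs] sum.distrib[symmetric]
      by (intro sum.cong refl) (simp add: algebra_simps)
    also have "(\<Sum>i\<in>UNIV. \<Sum>k\<in>UNIV. if i = k then Y$i$k * q^2 * ((if j = l then 1 else 0) * P$i$j - P$i$j * P$i$l) else 0)
       = (\<Sum>i\<in>UNIV. r * q^2 * ((if j = l then 1 else 0) * P$i$j - P$i$j * P$i$l))"
      by (simp add: diag)
    also have "\<dots> = q^2 * r * ((if j = l then 1 else 0) * (\<Sum>i\<in>UNIV. P$i$j) - (\<Sum>i\<in>UNIV. P$j$i * P$i$l))"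
      by (simp add: sum_distrib_left sum_subtractf right_diff_distrib Ps mult_ac)
    also have "(\<Sum>i\<in>UNIV. \<Sum>k\<in>UNIV. Y$i$k * ?Q$i$j * ?Q$k$l) = (?Q ** Y ** ?Q) $ j $ l"
      apply (simp add: matrix_matrix_mult_def sum_distrib_right sum_distrib_left Pqs mult_ac)
      apply (subst sum.swap) by (simp add: mult_ac)
    finally show "psi P q Y $ j $ l = (?Q ** Y ** ?Q + (q^2 * r) *\<^sub>R (mat 1 - P ** P)) $ j $ l"
      by (simp add: cs mat_def matrix_matrix_mult_def algebra_simps)
  qed
qed



definition pmat :: "('n \<Rightarrow> 'n) \<Rightarrow> real^'n^'n" where
  "pmat \<sigma> = (\<chi> i j. if j = \<sigma> i then 1 else 0)"

lemma ind_l: "(if b then 1 else 0) * (x::real) = (if b then x else 0)" by simp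
lemma ind_r: "(x::real) * (if b then 1 else 0) = (if b then x else 0)" by simp

lemma pmat_left: "(pmat \<sigma> ** A) $ i $ k = A $ (\<sigma> i) $ k"
proof -
  have "(pmat \<sigma> ** A) $ i $ k = (\<Sum>j\<in>UNIV. if j = \<sigma> i then A$j$k else 0)"
    unfolding pmat_def matrix_matrix_mult_def by (simp add: ind_l)
  then show ?thesis by simp
qed

lemma pmat_right: assumes "inj \<sigma>" shows "(A ** pmat \<sigma>) $ i $ (\<sigma> i) = A $ i $ i"
proof -
  have "(A ** pmat \<sigma>) $ i $ (\<sigma> i) = (\<Sum>j\<in>UNIV. if j = i then A$i$j else 0)"
    unfolding pmat_def matrix_matrix_mult_def using assms by (simp add: ind_r inj_eq)
  then show ?thesis by simp
qed

lemma pmat_inv: assumes "bij \<sigma>" shows "pmat \<sigma> ** transpose (pmat \<sigma>) = mat 1" "transpose (pmat \<sigma>) ** pmat \<sigma> = mat 1"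
proof -
  have inj: "inj \<sigma>" using assms bij_is_inj by blast
  show 1: "pmat \<sigma> ** transpose (pmat \<sigma>) = mat 1"
  proof (intro vec_eq_iff[THEN iffD2] allI)
    fix i k
    show "(pmat \<sigma> ** transpose (pmat \<sigma>)) $ i $ k = mat 1 $ i $ k"
      unfolding pmat_left by (simp add: transpose_def pmat_def mat_def inj_eq[OF inj])
  qed
  then show "transpose (pmat \<sigma>) ** pmat \<sigma> = mat 1"
    using matrix_left_right_inverse by blast
qed

definition Dc :: "real^'n^'n \<Rightarrow> bool" where "Dc A \<longleftrightarrow> (\<forall>i j. A$i$i = A$j$j)"

lemma mpow_Suc: "mpow A (Suc k) = A ** mpow A k" by (simp add: mpow_def)
lemma mpow_0: "mpow A 0 = mat 1" by (simp add: mpow_def)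
lemma mpow_Suc': "mpow A (Suc k) = mpow A k ** A"
  by (induction k) (simp_all add: mpow_Suc mpow_0 matrix_mul_assoc)

lemma Dc_mpow: assumes "transitive_mat P" shows "Dc (mpow P k)"
  unfolding Dc_def
proof (intro allI)
  fix i j
  obtain Pm where Pm: "perm_matrix Pm" "Pm$i$j = 1" "Pm ** P ** matrix_inv Pm = P"
    using assms transitive_mat_def by blast
  obtain \<sigma> where s: "bij \<sigma>" "Pm = pmat \<sigma>" using Pm(1) unfolding perm_matrix_def pmat_def by blast
  have inj: "inj \<sigma>" using s bij_is_inj by blast
  have j: "j = \<sigma> i" using Pm(2) s(2) by (simp add: pmat_def split: if_splits)
  have "matrix_inv Pm ** Pm = mat 1"
  proof -
    have ex: "\<exists>A'. Pm ** A' = mat 1 \<and> A' ** Pm = mat 1" using pmat_inv[OF s(1)] s(2) by blast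
    show ?thesis unfolding matrix_inv_def by (rule someI_ex[OF ex, THEN conjunct2])
  qed
  then have comm: "Pm ** P = P ** Pm"
  proof -
    assume inv: "matrix_inv Pm ** Pm = mat 1"
    have "Pm ** P = (Pm ** P) ** (matrix_inv Pm ** Pm)" by (simp add: inv)
    also have "\<dots> = (Pm ** P ** matrix_inv Pm) ** Pm" by (simp only: matrix_mul_assoc)
    also have "\<dots> = P ** Pm" by (simp only: Pm(3))
    finally show ?thesis .
  qed
  have "Pm ** mpow P k = mpow P k ** Pm"
  proof (induction k)
    case 0 then show ?case by (simp add: mpow_0)
  next
    case (Suc k)
    have "Pm ** mpow P (Suc k) = (Pm ** P) ** mpow P k" by (simp add: mpow_Suc matrix_mul_assoc)
    also have "\<dots> = P ** (Pm ** mpow P k)" by (simp add: comm matrix_mul_assoc)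
    also have "\<dots> = mpow P (Suc k) ** Pm" by (simp add: Suc mpow_Suc matrix_mul_assoc)
    finally show ?case .
  qed
  then have e: "(pmat \<sigma> ** mpow P k) $ i $ (\<sigma> i) = (mpow P k ** pmat \<sigma>) $ i $ (\<sigma> i)"
    using s(2) by simp
  have "mpow P k $ j $ j = (pmat \<sigma> ** mpow P k) $ i $ (\<sigma> i)"
    unfolding pmat_left j ..
  also have "\<dots> = mpow P k $ i $ i" unfolding e by (rule pmat_right[OF inj])
  finally show "mpow P k $ i $ i = mpow P k $ j $ j" by simp
qed



lemma madd_r: "((A::real^'n^'n) + B) ** C = A ** C + B ** C"
  by (vector matrix_matrix_mult_def sum.distrib[symmetric] field_simps)
lemma mscale_r: "((c *\<^sub>R A)::real^'n^'n) ** B = c *\<^sub>R (A ** B)"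
  by (simp add: scalar_matrix_assoc)
lemma mscale_l: "(A::real^'n^'n) ** (c *\<^sub>R B) = c *\<^sub>R (A ** B)"
  by (simp add: matrix_matrix_mult_def vec_eq_iff sum_distrib_left mult_ac)

definition Sgen :: "real^'n^'n \<Rightarrow> nat \<Rightarrow> (real^'n^'n) set" where
  "Sgen P m = {mpow P k | k. k \<le> m} \<union> {Jmat}"

lemma Sgen_mono: "span (Sgen P m) \<subseteq> span (Sgen P (Suc m))"
  by (rule span_mono) (auto simp: Sgen_def)

lemma PJ: assumes "row_stochastic P" shows "P ** Jmat = Jmat"
  using assms by (simp add: vec_eq_iff matrix_matrix_mult_def Jmat_def row_stochastic_def flip: sum_divide_distrib)

lemma JP: assumes "row_stochastic P" "transpose P = P" shows "Jmat ** P = Jmat"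
proof -
  have tJ: "transpose Jmat = (Jmat :: real^'n^'n)" by (simp add: Jmat_def transpose_def)
  have "Jmat ** P = transpose (transpose P ** transpose Jmat)" by (simp add: matrix_transpose_mul)
  also have "\<dots> = transpose (P ** Jmat)" by (simp only: tJ assms(2))
  also have "\<dots> = Jmat" by (simp only: PJ[OF assms(1)] tJ)
  finally show ?thesis .
qed

lemma subspace_Dc: "subspace (Collect (Dc :: real^'n^'n \<Rightarrow> bool))"
  unfolding subspace_def
proof (intro conjI ballI allI)
  show "0 \<in> Collect Dc" by (simp add: Dc_def)
next
  fix x y :: "real^'n^'n"
  assume "x \<in> Collect Dc" "y \<in> Collect Dc"
  then have hx: "\<And>i j. x$i$i = x$j$j" and hy: "\<And>i j. y$i$i = y$j$j" by (simp_all add: Dc_def)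
  show "x + y \<in> Collect Dc" unfolding mem_Collect_eq Dc_def
  proof (intro allI)
    fix i j show "(x+y)$i$i = (x+y)$j$j" using hx[of i j] hy[of i j] by simp
  qed
next
  fix c :: real and x :: "real^'n^'n"
  assume "x \<in> Collect Dc"
  then have hx: "\<And>i j. x$i$i = x$j$j" by (simp_all add: Dc_def)
  show "c *\<^sub>R x \<in> Collect Dc" unfolding mem_Collect_eq Dc_def
  proof (intro allI)
    fix i j show "(c *\<^sub>R x)$i$i = (c *\<^sub>R x)$j$j" using hx[of i j] by simp
  qed
qed

lemma Dc_span: assumes "transitive_mat P" "A \<in> span (Sgen P m)" shows "Dc A"
  using assms(2)
proof (induction rule: span_induct)
  case step
  then show ?case using Dc_mpow[OF assms(1)] by (auto simp: Sgen_def Dc_def Jmat_def)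
next
  case base
  show ?case by (rule subspace_Dc)
qed

lemma left_span: assumes "row_stochastic P" "A \<in> span (Sgen P m)" shows "P ** A \<in> span (Sgen P (Suc m))"
  using assms(2)
proof (induction rule: span_induct)
  case (step x)
  then show ?case using PJ[OF assms(1)]
    by (auto simp: Sgen_def mpow_Suc[symmetric] intro!: span_base)
next
  case base
  show ?case by (auto simp: subspace_def matrix_add_ldistrib mscale_l span_zero intro: span_add span_scale)
qed

lemma right_span: assumes "row_stochastic P" "transpose P = P" "A \<in> span (Sgen P m)" shows "A ** P \<in> span (Sgen P (Suc m))"
  using assms(3)
proof (induction rule: span_induct)
  case (step x)
  then show ?case using JP[OF assms(1,2)]
    by (auto simp: Sgen_def mpow_Suc'[symmetric] intro!: span_base)
next
  case base
  show ?case by (auto simp: subspace_def madd_r mscale_r span_zero intro: span_add span_scale)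
qed

lemma Pq_left: "Pq q P ** (A::real^'n^'n) = (1-q) *\<^sub>R A + q *\<^sub>R (P ** A)"
  by (simp add: Pq_def madd_r mscale_r)
lemma Pq_right: "(A::real^'n^'n) ** Pq q P = (1-q) *\<^sub>R A + q *\<^sub>R (A ** P)"
  unfolding Pq_def matrix_add_ldistrib mscale_l by simp

lemma step_span: assumes "row_stochastic P" "transpose P = P" "A \<in> span (Sgen P (2*t))"
  shows "Pq q P ** A ** Pq q P + c *\<^sub>R (mat 1 - P ** P) \<in> span (Sgen P (2 * Suc t))"
proof -
  have 2: "2 * Suc t = Suc (Suc (2*t))" by simp
  have a1: "A \<in> span (Sgen P (Suc (2*t)))" using Sgen_mono assms(3) by blast
  have b1: "Pq q P ** A \<in> span (Sgen P (Suc (2*t)))"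
    unfolding Pq_left using a1 left_span[OF assms(1,3)] by (intro span_add span_scale)
  have b2: "Pq q P ** A \<in> span (Sgen P (2 * Suc t))" using b1 Sgen_mono 2 by auto
  have c: "Pq q P ** A ** Pq q P \<in> span (Sgen P (2 * Suc t))"
    unfolding Pq_right 2 using b2 right_span[OF assms(1,2) b1] 2 by (intro span_add span_scale) auto
  have d: "mat 1 - P ** P \<in> span (Sgen P (2 * Suc t))"
  proof -
    have "mat 1 = mpow P 0" "P ** P = mpow P 2" by (simp_all add: mpow_def numeral_2_eq_2)
    moreover have "mpow P 0 \<in> Sgen P (2 * Suc t)" "mpow P 2 \<in> Sgen P (2 * Suc t)" by (auto simp: Sgen_def)
    ultimately show ?thesis by (metis span_diff span_base)
  qed
  show ?thesis using c d by (intro span_add span_scale)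
qed


theorem lemma2:
  fixes P :: "real^'n^'n" and q :: real and t :: nat
  assumes "row_stochastic P"
    and "0 \<le> q" "q \<le> 1"
    and "transpose P = P"
    and "transitive_mat P"
  defines "X \<equiv> (\<lambda>s. (adjoint (Phi P q) ^^ s) (mat 1 - Jmat))"
  shows "X t \<in> span ({mpow P k | k. k \<le> 2 * t} \<union> {Jmat})
         \<and> (\<exists>r. \<forall>i. X t $ i $ i = r)
         \<and> (\<forall>i. X (Suc t) = Pq q P ** X t ** Pq q P + (q^2 * X t $ i $ i) *\<^sub>R (mat 1 - P ** P))"
proof -
  note rs = assms(1) and sym = assms(4) and tr = assms(5)
  have Xs: "X (Suc s) = psi P q (X s)" for s by (simp add: X_def adjoint_Phi)
  have rec: "X (Suc s) = Pq q P ** X s ** Pq q P + (q^2 * X s $ i $ i) *\<^sub>R (mat 1 - P ** P)"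
    if "X s \<in> span (Sgen P (2 * s))" for s i
  proof -
    have "Dc (X s)" using Dc_span[OF tr that] .
    then have d: "\<And>k. X s $ k $ k = X s $ i $ i" unfolding Dc_def by blast
    show ?thesis unfolding Xs by (rule psi_const[OF rs sym d])
  qed
  have sp: "X s \<in> span (Sgen P (2 * s))" for s
  proof (induction s)
    case 0
    have "mpow P 0 \<in> Sgen P (2 * 0)" "Jmat \<in> Sgen P (2 * 0)" by (auto simp: Sgen_def)
    moreover have "X 0 = mpow P 0 - Jmat" by (simp add: X_def mpow_def)
    ultimately show ?case by (metis span_diff span_base)
  next
    case (Suc s)
    show ?case unfolding rec[OF Suc, of undefined] by (rule step_span[OF rs sym Suc])
  qed
  have "Dc (X t)" using Dc_span[OF tr sp] .
  then have "\<exists>r. \<forall>i. X t $ i $ i = r" unfolding Dc_def by blast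
  moreover have "X t \<in> span ({mpow P k | k. k \<le> 2 * t} \<union> {Jmat})" using sp[of t] by (simp add: Sgen_def)
  moreover have "\<forall>i. X (Suc t) = Pq q P ** X t ** Pq q P + (q^2 * X t $ i $ i) *\<^sub>R (mat 1 - P ** P)"
    using rec[OF sp] by blast
  ultimately show ?thesis by blast
qed

end
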